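(* Consider the semi-distributed gossip network described in the context, with $n$ nodes, source self-update rate $\lambda_e>0$, source-to-network update rate $\lambda>0$, and total gossip capacity $B=n\lambda$. Then, with $\lambda_e$ and $\lambda$ fixed, the steady-state mean version age $a_i=\lim_{t\to\infty}\mathbb{E}[\Delta_i(t)]$ of any node $i$ scales as $O(1)$ as $n\to\infty$.
   Context: A source (node $0$) and nodes $\mathcal{N}=\{1,\dots,n\}$ form a fully connected network. The source generates new versions of its information according to a Poisson process of rate $\lambda_e$; $N_s(t)$ denotes the source's version at time $t$ and $N_i(t)$ the version held by node $i$. The source sends its current version to each node $i$ according to an independent Poisson process of rate $\lambda/n$ (total rate $\lambda$). The version age of node $i$ is $\Delta_i(t)=N_s(t)-N_i(t)$: a source self-update increases every $\Delta_i$ by $1$; a source-to-node-$i$ update sets $\Delta_i$ to $0$; when node $j$ gossips to node $i$, node $i$'s age becomes $\min\{\Delta_j(t),\Delta_i(t)\}$. A node gossiping at total rate $B$ sends gossip updates to each of its $n-1$ neighbors according to a Poisson process of rate $B/(n-1)$. Semi-distributed scheme: whenever a node receives an update from the source, it sends a pilot signal to all other nodes and starts gossiping with total rate $B$; a gossiping node stops gossiping as soon as it receives a pilot signal from another node. Thus at any time (at most) one node gossips, namely the one most recently updated by the source. The steady-state mean age is $a_i=\lim_{t\to\infty}\mathbb{E}[\Delta_i(t)]$. *)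

theory Defs
  imports "HOL-Probability.Probability"
begin

text \<open>
  State of the semi-distributed gossip network: the currently gossiping node
  (None before any source update has happened) and the version ages
  Delta_i for nodes i in {1..n}.
\<close>
type_synonym gstate = "nat option \<times> (nat \<Rightarrow> nat)"

definition self_upd :: "gstate \<Rightarrow> gstate" where
  "self_upd s = (fst s, (\<lambda>i. snd s i + 1))"

definition src_upd :: "gstate \<Rightarrow> nat \<Rightarrow> gstate" where
  "src_upd s i = (Some i, (snd s)(i := 0))"

definition gossip_upd :: "nat \<Rightarrow> gstate \<Rightarrow> nat \<Rightarrow> gstate" where
  "gossip_upd j s i = (fst s, (snd s)(i := min (snd s j) (snd s i)))"

text \<open>
  Uniformised jump kernel of the continuous-time Markov chain, with
  uniformisation rate R = lambda_e + lambda + B.  Given a jump,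
  with probability lambda_e/R it is a source self-update; otherwise with
  probability lambda/(lambda+B) it is a source update of a uniformly chosen
  node (rate lambda/n each); otherwise it is a gossip update from the current
  gossiping node j to a uniformly chosen other node (rate B/(n-1) each), or
  a fictitious self-loop if no node gossips.
\<close>
definition gossip_kernel :: "nat \<Rightarrow> real \<Rightarrow> real \<Rightarrow> real \<Rightarrow> gstate \<Rightarrow> gstate pmf" where
  "gossip_kernel n lam_e lam B s =
     do { b1 \<leftarrow> bernoulli_pmf (lam_e / (lam_e + lam + B));
          if b1 then return_pmf (self_upd s)
          else do { b2 \<leftarrow> bernoulli_pmf (lam / (lam + B));
                    if b2 then map_pmf (src_upd s) (pmf_of_set {1..n})
                    else (case fst s of
                            None \<Rightarrow> return_pmf s
                          | Some j \<Rightarrow> map_pmf (gossip_upd j s) (pmf_of_set ({1..n} - {j}))) } }"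

definition gossip_init :: gstate where
  "gossip_init = (None, (\<lambda>_. 0))"

definition gossip_jumps :: "nat \<Rightarrow> real \<Rightarrow> real \<Rightarrow> real \<Rightarrow> nat \<Rightarrow> gstate pmf" where
  "gossip_jumps n lam_e lam B k =
     ((\<lambda>p. bind_pmf p (gossip_kernel n lam_e lam B)) ^^ k) (return_pmf gossip_init)"

text \<open>
  Expected version age E[Delta_i(t)] of node i at time t, via uniformisation:
  the number of jumps in [0,t] is Poisson with mean R t.
\<close>
definition mean_age_at :: "nat \<Rightarrow> real \<Rightarrow> real \<Rightarrow> real \<Rightarrow> nat \<Rightarrow> real \<Rightarrow> real" where
  "mean_age_at n lam_e lam B i t =
     (let R = lam_e + lam + B in
      \<Sum>k. exp (- (R * t)) * (R * t) ^ k / fact k *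
           measure_pmf.expectation (gossip_jumps n lam_e lam B k) (\<lambda>s. real (snd s i)))"

end

theory Submission
  imports Defs
begin


lemma expect_bind_fin:
  fixes h :: "'b \<Rightarrow> real"
  assumes "finite (set_pmf p)" "\<And>x. x \<in> set_pmf p \<Longrightarrow> finite (set_pmf (f x))"
  shows "measure_pmf.expectation (p \<bind> f) h = measure_pmf.expectation p (\<lambda>x. measure_pmf.expectation (f x) h)"
proof -
  have "measure_pmf.expectation (p \<bind> f) h = (\<Sum>a\<in>set_pmf p. pmf p a *\<^sub>R measure_pmf.expectation (f a) h)"
    by (rule pmf_expectation_bind) (use assms in auto)
  also have "\<dots> = measure_pmf.expectation p (\<lambda>x. measure_pmf.expectation (f x) h)"
    by (rule integral_measure_pmf[symmetric]) (use assms in auto)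
  finally show ?thesis .
qed

lemma ne_diff: "(n::nat) \<ge> 2 \<Longrightarrow> {Suc 0..n} - {j} \<noteq> {}"
proof -
  assume n: "n \<ge> 2"
  have "Suc 0 \<in> {Suc 0..n} - {j} \<or> 2 \<in> {Suc 0..n} - {j}" using n by auto
  thus ?thesis by blast
qed

definition gos_part :: "nat \<Rightarrow> gstate \<Rightarrow> gstate pmf" where
  "gos_part n s = (case fst s of
                            None \<Rightarrow> return_pmf s
                          | Some j \<Rightarrow> map_pmf (gossip_upd j s) (pmf_of_set ({1..n} - {j})))"

definition inner_part :: "nat \<Rightarrow> real \<Rightarrow> real \<Rightarrow> gstate \<Rightarrow> gstate pmf" where
  "inner_part n lam B s = do { b2 \<leftarrow> bernoulli_pmf (lam / (lam + B));
                    if b2 then map_pmf (src_upd s) (pmf_of_set {1..n})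
                    else gos_part n s }"

lemma kernel_alt: "gossip_kernel n le l B s =
   do { b1 \<leftarrow> bernoulli_pmf (le / (le + l + B));
          if b1 then return_pmf (self_upd s) else inner_part n l B s}"
  unfolding gossip_kernel_def inner_part_def gos_part_def by (rule refl)

lemma fin_gos: "n \<ge> 2 \<Longrightarrow> finite (set_pmf (gos_part n s))"
  unfolding gos_part_def by (cases "fst s") (simp_all add: set_pmf_of_set[OF ne_diff])

lemma fin_src: "n \<ge> 2 \<Longrightarrow> finite (set_pmf (map_pmf (src_upd s) (pmf_of_set {1..n})))"
  by simp

lemma fin_inner: "n \<ge> 2 \<Longrightarrow> finite (set_pmf (inner_part n l B s))"
  unfolding inner_part_def set_bind_pmf
  by (rule finite_UN_I) (auto simp: fin_gos)

lemma kernel_fin: "n \<ge> 2 \<Longrightarrow> finite (set_pmf (gossip_kernel n le l B s))"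
  unfolding kernel_alt set_bind_pmf
  by (rule finite_UN_I) (auto simp: fin_inner)

lemma exp_gos:
  fixes f :: "gstate \<Rightarrow> real"
  assumes "n \<ge> 2"
  shows "measure_pmf.expectation (gos_part n s) f =
     (case fst s of None \<Rightarrow> f s | Some j \<Rightarrow> (\<Sum>m\<in>{1..n}-{j}. f (gossip_upd j s m)) / card ({1..n}-{j}))"
  unfolding gos_part_def using assms
  by (cases "fst s") (simp_all add: integral_pmf_of_set[OF ne_diff])

lemma exp_src:
  fixes f :: "gstate \<Rightarrow> real"
  assumes "n \<ge> 2"
  shows "measure_pmf.expectation (map_pmf (src_upd s) (pmf_of_set {1..n})) f =
     (\<Sum>m\<in>{1..n}. f (src_upd s m)) / n"
  using assms by (simp add: integral_pmf_of_set)

lemma exp_inner: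
  fixes f :: "gstate \<Rightarrow> real"
  assumes "n \<ge> 2" "l > 0" "B > 0"
  shows "measure_pmf.expectation (inner_part n l B s) f =
     l/(l+B) * ((\<Sum>m\<in>{1..n}. f (src_upd s m)) / n) + (1 - l/(l+B)) * measure_pmf.expectation (gos_part n s) f"
proof -
  have "measure_pmf.expectation (inner_part n l B s) f = measure_pmf.expectation (bernoulli_pmf (l / (l + B)))
     (\<lambda>b. measure_pmf.expectation (if b then map_pmf (src_upd s) (pmf_of_set {1..n}) else gos_part n s) f)"
    unfolding inner_part_def
    by (rule expect_bind_fin) (use fin_src[OF assms(1)] in \<open>simp_all add: fin_gos[OF assms(1)]\<close>)
  also have "\<dots> = l/(l+B) * ((\<Sum>m\<in>{1..n}. f (src_upd s m)) / n) + (1 - l/(l+B)) * measure_pmf.expectation (gos_part n s) f"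
    proof -
    have p0: "0 \<le> l/(l+B)" "l/(l+B) \<le> 1" using assms by (simp_all add: divide_le_eq_1)
    show ?thesis
      by (subst integral_bernoulli_pmf[OF p0]) (simp only: if_True if_False exp_src[OF assms(1)] mult.commute)
  qed
  finally show ?thesis .
qed

lemma exp_kernel:
  fixes f :: "gstate \<Rightarrow> real"
  assumes "n \<ge> 2" "l > 0" "B > 0" "le > 0"
  shows "measure_pmf.expectation (gossip_kernel n le l B s) f =
     le/(le+l+B) * f (self_upd s) + (1 - le/(le+l+B)) * measure_pmf.expectation (inner_part n l B s) f"
proof -
  have "measure_pmf.expectation (gossip_kernel n le l B s) f = measure_pmf.expectation (bernoulli_pmf (le / (le + l + B)))
     (\<lambda>b. measure_pmf.expectation (if b then return_pmf (self_upd s) else inner_part n l B s) f)"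
    unfolding kernel_alt
    by (rule expect_bind_fin) (simp_all add: fin_inner[OF assms(1)])
  also have "\<dots> = le/(le+l+B) * f (self_upd s) + (1 - le/(le+l+B)) * measure_pmf.expectation (inner_part n l B s) f"
  proof -
    have p0: "0 \<le> le/(le+l+B)" "le/(le+l+B) \<le> 1" using assms by (simp_all add: divide_le_eq_1)
    show ?thesis
      by (subst integral_bernoulli_pmf[OF p0]) (simp only: if_True if_False expectation_return_pmf mult.commute)
  qed
  finally show ?thesis .
qed



definition Ev :: "nat \<Rightarrow> gstate \<Rightarrow> real" where "Ev i s = real (snd s i)"
definition Hv :: "nat \<Rightarrow> gstate \<Rightarrow> real" where
  "Hv i s = (case fst s of None \<Rightarrow> 0 | Some j \<Rightarrow> real (snd s i) - real (snd s j))"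
definition ginv :: "nat \<Rightarrow> gstate \<Rightarrow> bool" where
  "ginv n s = (case fst s of None \<Rightarrow> True | Some j \<Rightarrow> j \<in> {1..n} \<and> (\<forall>m. snd s j \<le> snd s m))"

lemma sum_if_const:
  fixes a b :: real
  assumes "finite A"
  shows "(\<Sum>m\<in>A. if m = i then a else b) = (if i \<in> A then a - b else 0) + real (card A) * b"
proof (cases "i \<in> A")
  case True
  have "(\<Sum>m\<in>A. if m = i then a else b) = a + (\<Sum>m\<in>A-{i}. if m = i then a else b)"
    by (subst sum.remove[OF assms True]) simp
  also have "(\<Sum>m\<in>A-{i}. if m = i then a else b) = (\<Sum>m\<in>A-{i}. b)" by (rule sum.cong) auto
  also have "\<dots> = real (card A - 1) * b" using True assms by simp
  finally have e: "(\<Sum>m\<in>A. if m = i then a else b) = a + real (card A - 1) * b" .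
  have "card A \<ge> 1" using True assms by (auto simp: Suc_le_eq card_gt_0_iff)
  then have "real (card A - 1) = real (card A) - 1" by (simp add: of_nat_diff)
  then show ?thesis using e True by (simp add: algebra_simps)
next
  case False
  have "(\<Sum>m\<in>A. if m = i then a else b) = (\<Sum>m\<in>A. b)" by (rule sum.cong) (use False in auto)
  thus ?thesis using False by simp
qed

lemma card_diff1: "j \<in> {1..n} \<Longrightarrow> card ({1..n} - {j}) = n - 1"
  by (simp add: card_Diff_singleton)

lemma src_Ev: "(\<Sum>m\<in>{1..n}. Ev i (src_upd s m)) = (\<Sum>m\<in>{1..n}. if m = i then 0 else Ev i s)"
  by (rule sum.cong) (auto simp: Ev_def src_upd_def)

lemma src_Hv: "(\<Sum>m\<in>{1..n}. Hv i (src_upd s m)) = (\<Sum>m\<in>{1..n}. if m = i then 0 else Ev i s)"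
  by (rule sum.cong) (auto simp: Ev_def Hv_def src_upd_def)

lemma exp_src_Ev:
  assumes "n \<ge> 2" "i \<in> {1..n}"
  shows "(\<Sum>m\<in>{1..n}. Ev i (src_upd s m)) / n = (1 - 1/n) * Ev i s"
proof -
  have "(\<Sum>m\<in>{1..n}. if m = i then 0 else Ev i s) = (0 - Ev i s) + real (card {1..n}) * Ev i s"
    by (subst sum_if_const) (use assms in auto)
  also have "\<dots> = (real n - 1) * Ev i s" by (simp add: algebra_simps)
  finally have e: "(\<Sum>m\<in>{1..n}. if m = i then 0 else Ev i s) = (real n - 1) * Ev i s" .
  have "real n > 0" using assms by simp
  then show ?thesis unfolding src_Ev e by (simp add: divide_simps)
qed

lemma exp_src_Hv:
  assumes "n \<ge> 2" "i \<in> {1..n}"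
  shows "(\<Sum>m\<in>{1..n}. Hv i (src_upd s m)) / n = (1 - 1/n) * Ev i s"
proof -
  have "(\<Sum>m\<in>{1..n}. if m = i then 0 else Ev i s) = (0 - Ev i s) + real (card {1..n}) * Ev i s"
    by (subst sum_if_const) (use assms in auto)
  also have "\<dots> = (real n - 1) * Ev i s" by (simp add: algebra_simps)
  finally have e: "(\<Sum>m\<in>{1..n}. if m = i then 0 else Ev i s) = (real n - 1) * Ev i s" .
  have "real n > 0" using assms by simp
  then show ?thesis unfolding src_Hv e by (simp add: divide_simps)
qed

lemma gos_Ev:
  assumes "n \<ge> 2" "i \<in> {1..n}" "ginv n s"
  shows "measure_pmf.expectation (gos_part n s) (Ev i) = Ev i s - Hv i s / (n - 1)"
proof (cases "fst s")
  case None
  then show ?thesis using assms by (simp add: exp_gos Hv_def)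
next
  case (Some j)
  have j: "j \<in> {1..n}" "\<forall>m. snd s j \<le> snd s m" using assms(3) Some by (auto simp: ginv_def)
  have "(\<Sum>m\<in>{1..n}-{j}. Ev i (gossip_upd j s m)) = (\<Sum>m\<in>{1..n}-{j}. if m = i then real (snd s j) else Ev i s)"
    by (rule sum.cong) (use j in \<open>auto simp: Ev_def gossip_upd_def min_def\<close>)
  also have "\<dots> = (if i \<in> {1..n}-{j} then real (snd s j) - Ev i s else 0) + real (n - 1) * Ev i s"
    by (subst sum_if_const) (auto simp: card_diff1[OF j(1), unfolded One_nat_def])
  finally have eq: "(\<Sum>m\<in>{1..n}-{j}. Ev i (gossip_upd j s m)) = (if i \<in> {1..n}-{j} then real (snd s j) - Ev i s else 0) + real (n - 1) * Ev i s" .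
  have n1: "real (n - 1) = real n - 1" using assms by simp
  have "real n - 1 > 0" using assms by simp
  have lhs: "measure_pmf.expectation (gos_part n s) (Ev i) = ((if i \<in> {1..n}-{j} then real (snd s j) - Ev i s else 0) + (real n - 1) * Ev i s) / (real n - 1)"
    by (simp only: exp_gos[OF assms(1)] Some option.case eq card_diff1[OF j(1)] n1)
  have hv: "Hv i s = Ev i s - real (snd s j)" by (simp add: Hv_def Ev_def Some)
  show ?thesis
  proof (cases "i = j")
    case True
    then have "i \<notin> {1..n}-{j}" by simp
    then show ?thesis unfolding lhs hv using \<open>real n - 1 > 0\<close> True by (simp add: Ev_def)
  next
    case False
    then have "i \<in> {1..n}-{j}" using assms by simp
    then show ?thesis unfolding lhs hv using \<open>real n - 1 > 0\<close>
      by (simp add: divide_simps)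
  qed
qed

lemma gos_Hv:
  assumes "n \<ge> 2" "i \<in> {1..n}" "ginv n s"
  shows "measure_pmf.expectation (gos_part n s) (Hv i) = Hv i s - Hv i s / (n - 1)"
proof (cases "fst s")
  case None
  then show ?thesis using assms by (simp add: exp_gos Hv_def)
next
  case (Some j)
  have j: "j \<in> {1..n}" "\<forall>m. snd s j \<le> snd s m" using assms(3) Some by (auto simp: ginv_def)
  have "(\<Sum>m\<in>{1..n}-{j}. Hv i (gossip_upd j s m)) = (\<Sum>m\<in>{1..n}-{j}. if m = i then 0 else Hv i s)"
    by (rule sum.cong) (use j Some in \<open>auto simp: Hv_def gossip_upd_def min_def\<close>)
  also have "\<dots> = (if i \<in> {1..n}-{j} then 0 - Hv i s else 0) + real (n - 1) * Hv i s"
    by (subst sum_if_const) (auto simp: card_diff1[OF j(1), unfolded One_nat_def])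
  finally have eq: "(\<Sum>m\<in>{1..n}-{j}. Hv i (gossip_upd j s m)) = (if i \<in> {1..n}-{j} then 0 - Hv i s else 0) + real (n - 1) * Hv i s" .
  have n1: "real (n - 1) = real n - 1" using assms by simp
  have "real n - 1 > 0" using assms by simp
  have lhs: "measure_pmf.expectation (gos_part n s) (Hv i) = ((if i \<in> {1..n}-{j} then 0 - Hv i s else 0) + (real n - 1) * Hv i s) / (real n - 1)"
    by (simp only: exp_gos[OF assms(1)] Some option.case eq card_diff1[OF j(1)] n1)
  show ?thesis
  proof (cases "i = j")
    case True
    then have "i \<notin> {1..n}-{j}" "Hv i s = 0" by (simp_all add: Hv_def Some)
    then show ?thesis unfolding lhs using \<open>real n - 1 > 0\<close> by simp
  next
    case False
    then have "i \<in> {1..n}-{j}" using assms by simp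
    then show ?thesis unfolding lhs using \<open>real n - 1 > 0\<close>
      by (simp add: divide_simps)
  qed
qed



lemma kernel_Ev:
  assumes "n \<ge> 2" "i \<in> {1..n}" "ginv n s" "l > 0" "B > 0" "le > 0"
  shows "measure_pmf.expectation (gossip_kernel n le l B s) (Ev i) =
    le/(le+l+B) * (Ev i s + 1) + (1 - le/(le+l+B)) * (l/(l+B) * ((1 - 1/n) * Ev i s)
      + (1 - l/(l+B)) * (Ev i s - Hv i s / (n - 1)))"
proof -
  have n1: "real (n - 1) = real n - 1" using assms by simp
  have "Ev i (self_upd s) = Ev i s + 1" by (simp add: Ev_def self_upd_def)
  then show ?thesis
    by (simp only: exp_kernel[OF assms(1,4,5,6)] exp_inner[OF assms(1,4,5)]
          exp_src_Ev[OF assms(1,2)] gos_Ev[OF assms(1,2,3)] n1)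
qed

lemma kernel_Hv:
  assumes "n \<ge> 2" "i \<in> {1..n}" "ginv n s" "l > 0" "B > 0" "le > 0"
  shows "measure_pmf.expectation (gossip_kernel n le l B s) (Hv i) =
    le/(le+l+B) * Hv i s + (1 - le/(le+l+B)) * (l/(l+B) * ((1 - 1/n) * Ev i s)
      + (1 - l/(l+B)) * (Hv i s - Hv i s / (n - 1)))"
proof -
  have n1: "real (n - 1) = real n - 1" using assms by simp
  have "Hv i (self_upd s) = Hv i s" by (cases "fst s") (simp_all add: Hv_def self_upd_def)
  then show ?thesis
    by (simp only: exp_kernel[OF assms(1,4,5,6)] exp_inner[OF assms(1,4,5)]
          exp_src_Hv[OF assms(1,2)] gos_Hv[OF assms(1,2,3)] n1)
qed

lemma supp_kernel:
  assumes "n \<ge> 2" "x \<in> set_pmf (gossip_kernel n le l B s)"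
  shows "x = self_upd s \<or> (\<exists>m\<in>{1..n}. x = src_upd s m) \<or> (fst s = None \<and> x = s) \<or>
         (\<exists>j m. fst s = Some j \<and> m \<in> {1..n}-{j} \<and> x = gossip_upd j s m)"
proof -
  have ne1: "{1..n} \<noteq> {}" using assms by simp
  have A: "set_pmf (pmf_of_set {1..n}) = {1..n}" by (rule set_pmf_of_set[OF ne1]) simp
  have B: "set_pmf (pmf_of_set ({1..n} - {j})) = {1..n} - {j}" for j
    by (rule set_pmf_of_set) (use ne_diff[OF assms(1)] in auto)
  have "x \<in> set_pmf (inner_part n l B s) \<Longrightarrow> ?thesis"
    unfolding inner_part_def set_bind_pmf gos_part_def
    by (cases "fst s") (auto simp: A[unfolded One_nat_def] B[unfolded One_nat_def] split: if_splits)
  then show ?thesis using assms(2) unfolding kernel_alt set_bind_pmf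
    by (auto split: if_splits)
qed

lemma ginv_step:
  assumes "n \<ge> 2" "ginv n s" "x \<in> set_pmf (gossip_kernel n le l B s)"
  shows "ginv n x"
  using supp_kernel[OF assms(1,3)]
proof (elim disjE exE conjE bexE)
  assume "x = self_upd s" then show ?thesis using assms(2)
    by (cases "fst s") (auto simp: ginv_def self_upd_def)
next
  fix m assume "m \<in> {1..n}" "x = src_upd s m" then show ?thesis
    by (auto simp: ginv_def src_upd_def)
next
  assume "fst s = None" "x = s" then show ?thesis using assms(2) by simp
next
  fix j m assume h: "fst s = Some j" "m \<in> {1..n} - {j}" "x = gossip_upd j s m"
  then show ?thesis using assms(2) by (auto simp: ginv_def gossip_upd_def)
qed

lemma jumps_Suc: "gossip_jumps n le l B (Suc k) = gossip_jumps n le l B k \<bind> gossip_kernel n le l B"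
  by (simp add: gossip_jumps_def)

lemma jumps_props:
  assumes "n \<ge> 2"
  shows "finite (set_pmf (gossip_jumps n le l B k)) \<and> (\<forall>x\<in>set_pmf (gossip_jumps n le l B k). ginv n x)"
proof (induction k)
  case 0
  then show ?case by (simp add: gossip_jumps_def gossip_init_def ginv_def)
next
  case (Suc k)
  then show ?case unfolding jumps_Suc set_bind_pmf
    using kernel_fin[OF assms] ginv_step[OF assms] by blast
qed



lemma scalar_conv:
  fixes E H :: "nat \<Rightarrow> real" and a s c \<alpha> :: real
  assumes E0: "E 0 = 0" and H0: "H 0 = 0"
    and recE: "\<And>k. E (Suc k) = (1 - s*\<alpha>) * E k - c * H k + a"
    and recH: "\<And>k. H (Suc k) = s*(1-\<alpha>) * E k + (1 - s - c) * H k"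
    and s: "0 < s" "s \<le> 1" and al: "0 < \<alpha>" "\<alpha> \<le> 1" and c: "0 \<le> c" "s*\<alpha> + c \<le> 1"
  shows "\<bar>E k - (a/s + (1-\<alpha>)*a/(s*\<alpha>+c))\<bar> \<le> (\<bar>a/s\<bar> + \<bar>(1-\<alpha>)*a/(s*\<alpha>+c)\<bar>) * (1 - s*\<alpha>)^k"
proof -
  define Hs where "Hs = (1-\<alpha>)*a/(s*\<alpha>+c)"
  define u where "u k = E k - H k - a/s" for k
  define v where "v k = H k - Hs" for k
  have pos: "s*\<alpha> + c > 0" using s al c by (simp add: add_pos_nonneg)
  have HsE: "(s*\<alpha>+c) * Hs = (1-\<alpha>)*a" unfolding Hs_def using pos by simp
  have u_step: "u (Suc k) = (1-s) * u k" for k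
    unfolding u_def recE recH using s by (simp add: field_simps)
  have v_step: "v (Suc k) = s*(1-\<alpha>) * u k + (1 - s*\<alpha> - c) * v k" for k
  proof -
    have "v (Suc k) = s*(1-\<alpha>) * E k + (1 - s - c) * H k - Hs" unfolding v_def recH ..
    also have "\<dots> = s*(1-\<alpha>) * u k + (1 - s*\<alpha> - c) * v k + ((1-\<alpha>)*a - (s*\<alpha>+c) * Hs)"
      unfolding u_def v_def using s by (simp add: field_simps)
    also have "\<dots> = s*(1-\<alpha>) * u k + (1 - s*\<alpha> - c) * v k" using HsE by simp
    finally show ?thesis .
  qed
  have bound: "\<bar>u k\<bar> + \<bar>v k\<bar> \<le> (1 - s*\<alpha>)^k * (\<bar>u 0\<bar> + \<bar>v 0\<bar>)" for k
  proof (induction k)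
    case 0 then show ?case by simp
  next
    case (Suc k)
    have c1: "1 - s \<ge> 0" "s*(1-\<alpha>) \<ge> 0" "1 - s*\<alpha> - c \<ge> 0" "s \<ge> 0" "1 - \<alpha> \<ge> 0" using s al c by auto
    have "\<bar>u (Suc k)\<bar> + \<bar>v (Suc k)\<bar> \<le> (1-s) * \<bar>u k\<bar> + (s*(1-\<alpha>) * \<bar>u k\<bar> + (1 - s*\<alpha> - c) * \<bar>v k\<bar>)"
    proof (intro add_mono)
      show "\<bar>u (Suc k)\<bar> \<le> (1-s) * \<bar>u k\<bar>" unfolding u_step using c1 by (simp add: abs_mult)
      have "\<bar>v (Suc k)\<bar> \<le> \<bar>s*(1-\<alpha>) * u k\<bar> + \<bar>(1 - s*\<alpha> - c) * v k\<bar>"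
        unfolding v_step by (rule abs_triangle_ineq)
      also have "\<dots> = s*(1-\<alpha>) * \<bar>u k\<bar> + (1 - s*\<alpha> - c) * \<bar>v k\<bar>"
        using c1 by (simp only: abs_mult abs_of_nonneg)
      finally show "\<bar>v (Suc k)\<bar> \<le> s*(1-\<alpha>) * \<bar>u k\<bar> + (1 - s*\<alpha> - c) * \<bar>v k\<bar>" .
    qed
    also have "\<dots> \<le> (1 - s*\<alpha>) * (\<bar>u k\<bar> + \<bar>v k\<bar>)"
      using c by (simp add: algebra_simps mult_nonneg_nonneg)
    also have "\<dots> \<le> (1 - s*\<alpha>) * ((1 - s*\<alpha>)^k * (\<bar>u 0\<bar> + \<bar>v 0\<bar>))"
      using Suc c1 c by (intro mult_left_mono) auto
    finally show ?case by simp
  qed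
  have "E k - (a/s + Hs) = u k + v k" unfolding u_def v_def by simp
  then have "\<bar>E k - (a/s + Hs)\<bar> \<le> \<bar>u k\<bar> + \<bar>v k\<bar>" by simp
  also have "\<dots> \<le> (1 - s*\<alpha>)^k * (\<bar>u 0\<bar> + \<bar>v 0\<bar>)" by (rule bound)
  also have "\<bar>u 0\<bar> + \<bar>v 0\<bar> = \<bar>a/s\<bar> + \<bar>Hs\<bar>" unfolding u_def v_def E0 H0 by simp
  finally show ?thesis unfolding Hs_def by (simp add: mult.commute)
qed



lemma exp_sums_real: "(\<lambda>k. (x::real)^k / fact k) sums exp x"
  using exp_converges[of x] by (simp add: divide_inverse_commute)

lemma poisson_limit:
  fixes E :: "nat \<Rightarrow> real"
  assumes R: "R > 0" and rho: "0 \<le> \<rho>" "\<rho> < 1" and bnd: "\<And>k. \<bar>E k - L\<bar> \<le> d * \<rho>^k"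
  shows "((\<lambda>t. \<Sum>k. exp (- (R * t)) * (R * t) ^ k / fact k * E k) \<longlongrightarrow> L) at_top"
proof -
  have d: "d \<ge> 0" using bnd[of 0] by simp
  define g where "g t = d * exp (- (R * (1 - \<rho>) * t))" for t
  have key: "\<bar>(\<Sum>k. exp (- (R * t)) * (R * t) ^ k / fact k * E k) - L\<bar> \<le> g t" if t: "t \<ge> 0" for t
  proof -
    define P where "P k = exp (- (R * t)) * (R * t) ^ k / fact k" for k
    have Pnn: "P k \<ge> 0" for k unfolding P_def using t R by simp
    have s1: "P sums (exp (- (R * t)) * exp (R * t))"
      unfolding P_def using sums_mult[OF exp_sums_real[of "R*t"], of "exp (- (R * t))"]
      by (simp add: mult.assoc times_divide_eq_right)
    have s1': "P sums 1" using s1 by (simp add: exp_add[symmetric])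
    have s2: "(\<lambda>k. d * (P k * \<rho>^k)) sums (d * (exp (- (R * t)) * exp (R * t * \<rho>)))"
      unfolding P_def using sums_mult[OF sums_mult[OF exp_sums_real[of "R*t*\<rho>"], of "exp (- (R * t))"], of d]
      by (simp add: power_mult_distrib field_simps)
    have val2: "d * (exp (- (R * t)) * exp (R * t * \<rho>)) = g t"
      unfolding g_def by (simp add: exp_add[symmetric] algebra_simps)
    have cmp: "norm (P k * (E k - L)) \<le> d * (P k * \<rho>^k)" for k
    proof -
      have "norm (P k * (E k - L)) = P k * \<bar>E k - L\<bar>" using Pnn[of k] by (simp add: abs_mult)
      also have "\<dots> \<le> P k * (d * \<rho>^k)" by (rule mult_left_mono[OF bnd[of k] Pnn[of k]])
      finally show ?thesis by (simp add: mult_ac)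
    qed
    have sm: "summable (\<lambda>k. P k * (E k - L))"
      by (rule summable_comparison_test[OF _ sums_summable[OF s2]]) (use cmp in auto)
    have sL: "(\<lambda>k. P k * L) sums L" using sums_mult2[OF s1', of L] by simp
    have sum_eq: "(\<lambda>k. P k * E k) sums (L + (\<Sum>k. P k * (E k - L)))"
      using sums_add[OF sL summable_sums[OF sm]] by (simp add: algebra_simps)
    have "\<bar>\<Sum>k. P k * (E k - L)\<bar> \<le> (\<Sum>k. d * (P k * \<rho>^k))"
    proof -
      have "\<bar>\<Sum>k. P k * (E k - L)\<bar> \<le> (\<Sum>k. \<bar>P k * (E k - L)\<bar>)"
        by (rule summable_rabs) (rule summable_comparison_test[OF _ sums_summable[OF s2]], use cmp in auto)
      also have "\<dots> \<le> (\<Sum>k. d * (P k * \<rho>^k))"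
      proof (rule suminf_le)
        show "summable (\<lambda>k. \<bar>P k * (E k - L)\<bar>)"
          by (rule summable_comparison_test[OF _ sums_summable[OF s2]]) (use cmp in auto)
        show "summable (\<lambda>k. d * (P k * \<rho>^k))" by (rule sums_summable[OF s2])
        show "\<And>k. \<bar>P k * (E k - L)\<bar> \<le> d * (P k * \<rho>^k)" using cmp by simp
      qed
      finally show ?thesis .
    qed
    also have "\<dots> = g t" using s2 val2 sums_unique by metis
    finally have b: "\<bar>\<Sum>k. P k * (E k - L)\<bar> \<le> g t" .
    have "(\<Sum>k. exp (- (R * t)) * (R * t) ^ k / fact k * E k) = L + (\<Sum>k. P k * (E k - L))"
      using sums_unique[OF sum_eq] unfolding P_def by simp
    then show ?thesis using b by simp
  qed
  have glim: "(g \<longlongrightarrow> 0) at_top"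
  proof -
    have c: "R * (1 - \<rho>) > 0" using R rho by simp
    have "filterlim (\<lambda>t. R * (1 - \<rho>) * t) at_top at_top"
      by (rule filterlim_tendsto_pos_mult_at_top[OF tendsto_const c filterlim_ident])
    then have "filterlim (\<lambda>t. - (R * (1 - \<rho>) * t)) at_bot at_top"
      by (simp add: filterlim_uminus_at_top)
    then have "((\<lambda>t. exp (- (R * (1 - \<rho>) * t))) \<longlongrightarrow> 0) at_top"
      by (rule filterlim_compose[OF exp_at_bot])
    then show ?thesis unfolding g_def using tendsto_mult_right_zero by blast
  qed
  have "((\<lambda>t. (\<Sum>k. exp (- (R * t)) * (R * t) ^ k / fact k * E k) - L) \<longlongrightarrow> 0) at_top"
    by (rule Lim_null_comparison[OF _ glim]) (use key in \<open>auto intro: eventually_at_top_linorderI[of 0]\<close>)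
  then show ?thesis by (simp add: LIM_zero_iff)
qed



lemma exp_fin:
  fixes f :: "'a \<Rightarrow> real"
  assumes "finite (set_pmf p)"
  shows "measure_pmf.expectation p f = (\<Sum>a\<in>set_pmf p. pmf p a * f a)"
  by (subst integral_measure_pmf[of "set_pmf p"]) (use assms in \<open>auto simp: mult.commute\<close>)

lemma lin_comb:
  fixes g u v :: "'a \<Rightarrow> real"
  assumes "finite (set_pmf p)" "\<And>a. a \<in> set_pmf p \<Longrightarrow> g a = c1 * u a + c2 * v a + c3"
  shows "measure_pmf.expectation p g = c1 * measure_pmf.expectation p u + c2 * measure_pmf.expectation p v + c3"
proof -
  have "(\<Sum>a\<in>set_pmf p. pmf p a * g a) = (\<Sum>a\<in>set_pmf p. c1 * (pmf p a * u a) + c2 * (pmf p a * v a) + c3 * pmf p a)"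
    by (rule sum.cong) (auto simp: assms(2) algebra_simps)
  also have "\<dots> = c1 * (\<Sum>a\<in>set_pmf p. pmf p a * u a) + c2 * (\<Sum>a\<in>set_pmf p. pmf p a * v a) + c3 * (\<Sum>a\<in>set_pmf p. pmf p a)"
    by (simp add: sum.distrib sum_distrib_left)
  also have "(\<Sum>a\<in>set_pmf p. pmf p a) = 1" by (rule sum_pmf_eq_1) (use assms in auto)
  finally show ?thesis using assms(1) by (simp add: exp_fin)
qed

lemma main_fixed:
  fixes le l :: real and n i :: nat
  assumes le: "le > 0" and l: "l > 0" and n: "n \<ge> 2" and i: "i \<in> {1..n}"
  shows "\<exists>a. ((\<lambda>t. mean_age_at n le l (real n * l) i t) \<longlongrightarrow> a) at_top \<and> a \<le> 2 * le / l"
proof -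
  define B where "B = real n * l"
  define R where "R = le + l + B"
  define pa where "pa = le / R"
  define q where "q = l / (l + B)"
  define s where "s = (1 - pa) * q"
  define \<alpha> where "\<alpha> = 1 / real n"
  define c where "c = (1 - pa) * (1 - q) / (real n - 1)"
  define E where "E k = measure_pmf.expectation (gossip_jumps n le l B k) (Ev i)" for k
  define H where "H k = measure_pmf.expectation (gossip_jumps n le l B k) (Hv i)" for k
  have nr: "real n \<ge> 2" using n by simp
  have Bpos: "B > 0" unfolding B_def using l nr by simp
  have Rpos: "R > 0" unfolding R_def using le l Bpos by simp
  have pa_eq: "1 - pa = (l + B) / R" unfolding pa_def R_def using Rpos R_def by (simp add: field_simps)
  have s_eq: "s = l / R" unfolding s_def pa_eq q_def using Bpos l Rpos by (simp add: divide_simps)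
  have c_eq: "c = B / (R * (real n - 1))" unfolding c_def pa_eq q_def using Bpos l nr Rpos by (simp add: divide_simps)
  have spos: "s > 0" using s_eq l Rpos by simp
  have sle: "s \<le> 1" unfolding s_eq R_def using le l Bpos by (simp add: divide_le_eq_1)
  have al: "0 < \<alpha>" "\<alpha> \<le> 1" unfolding \<alpha>_def using nr by auto
  have cnn: "c \<ge> 0" unfolding c_eq using Bpos Rpos nr by simp
  have c_le: "c \<le> B / R" unfolding c_eq using Bpos Rpos nr by (simp add: field_simps)
  have sac: "s * \<alpha> + c \<le> 1"
  proof -
    have "s * \<alpha> \<le> s" using al spos by (simp add: mult_left_le)
    then have "s * \<alpha> + c \<le> l / R + B / R" using c_le s_eq by simp
    also have "\<dots> \<le> 1" unfolding R_def using le l Bpos by (simp add: divide_simps)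
    finally show ?thesis .
  qed
  have fixEv: "(\<lambda>s. real (snd s i)) = Ev i" by (simp add: Ev_def fun_eq_iff)
  have props: "finite (set_pmf (gossip_jumps n le l B k))" "\<And>x. x \<in> set_pmf (gossip_jumps n le l B k) \<Longrightarrow> ginv n x" for k
    using jumps_props[OF n, of le l B k] by auto
  have step: "measure_pmf.expectation (gossip_jumps n le l B (Suc k)) f =
      measure_pmf.expectation (gossip_jumps n le l B k) (\<lambda>x. measure_pmf.expectation (gossip_kernel n le l B x) f)" for k and f :: "gstate \<Rightarrow> real"
    unfolding jumps_Suc by (rule expect_bind_fin) (use props kernel_fin[OF n] in auto)
  have n1: "real n - 1 > 0" using nr by simp
  have npos: "real n > 0" using nr by simp
  have recE: "E (Suc k) = (1 - s*\<alpha>) * E k - c * H k + pa" for k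
  proof -
    have "measure_pmf.expectation (gossip_jumps n le l B k) (\<lambda>x. measure_pmf.expectation (gossip_kernel n le l B x) (Ev i))
       = (1 - s*\<alpha>) * measure_pmf.expectation (gossip_jumps n le l B k) (Ev i) + (- c) * measure_pmf.expectation (gossip_jumps n le l B k) (Hv i) + pa"
    proof (rule lin_comb[OF props(1)])
      fix x assume x: "x \<in> set_pmf (gossip_jumps n le l B k)"
      show "measure_pmf.expectation (gossip_kernel n le l B x) (Ev i) = (1 - s*\<alpha>) * Ev i x + (- c) * Hv i x + pa"
        unfolding kernel_Ev[OF n i props(2)[OF x] l Bpos le] R_def[symmetric] pa_def[symmetric] q_def[symmetric]
          s_def \<alpha>_def c_def using n1 npos by (simp add: field_simps)
    qed
    then show ?thesis unfolding E_def H_def step by simp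
  qed
  have recH: "H (Suc k) = s*(1-\<alpha>) * E k + (1 - s - c) * H k" for k
    unfolding E_def H_def step
  proof -
    have "measure_pmf.expectation (gossip_jumps n le l B k) (\<lambda>x. measure_pmf.expectation (gossip_kernel n le l B x) (Hv i))
       = s*(1-\<alpha>) * measure_pmf.expectation (gossip_jumps n le l B k) (Ev i) + (1 - s - c) * measure_pmf.expectation (gossip_jumps n le l B k) (Hv i) + 0"
    proof (rule lin_comb[OF props(1)])
      fix x assume x: "x \<in> set_pmf (gossip_jumps n le l B k)"
      show "measure_pmf.expectation (gossip_kernel n le l B x) (Hv i) = s*(1-\<alpha>) * Ev i x + (1 - s - c) * Hv i x + 0"
        unfolding kernel_Hv[OF n i props(2)[OF x] l Bpos le] R_def[symmetric] pa_def[symmetric] q_def[symmetric]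
          s_def \<alpha>_def c_def using n1 npos by (simp add: field_simps)
    qed
    then show "measure_pmf.expectation (gossip_jumps n le l B k) (\<lambda>x. measure_pmf.expectation (gossip_kernel n le l B x) (Hv i))
       = s*(1-\<alpha>) * measure_pmf.expectation (gossip_jumps n le l B k) (Ev i) + (1 - s - c) * measure_pmf.expectation (gossip_jumps n le l B k) (Hv i)"
      by simp
  qed
  have E0: "E 0 = 0" unfolding E_def by (simp add: gossip_jumps_def gossip_init_def Ev_def)
  have H0: "H 0 = 0" unfolding H_def by (simp add: gossip_jumps_def gossip_init_def Hv_def)
  define L where "L = pa/s + (1-\<alpha>)*pa/(s*\<alpha>+c)"
  define d where "d = \<bar>pa/s\<bar> + \<bar>(1-\<alpha>)*pa/(s*\<alpha>+c)\<bar>"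
  have bnd: "\<bar>E k - L\<bar> \<le> d * (1 - s*\<alpha>)^k" for k
    unfolding L_def d_def by (rule scalar_conv[OF E0 H0 recE recH spos sle al cnn sac])
  have rho: "0 \<le> 1 - s*\<alpha>" "1 - s*\<alpha> < 1" using sac cnn spos al by auto
  have lim: "((\<lambda>t. \<Sum>k. exp (- (R * t)) * (R * t) ^ k / fact k * E k) \<longlongrightarrow> L) at_top"
    by (rule poisson_limit[OF Rpos rho bnd])
  have mean_eq: "(\<lambda>t. mean_age_at n le l (real n * l) i t) = (\<lambda>t. \<Sum>k. exp (- (R * t)) * (R * t) ^ k / fact k * E k)"
    unfolding mean_age_at_def Let_def fixEv E_def R_def B_def by simp
  have pa_nn: "pa \<ge> 0" unfolding pa_def using le Rpos by simp
  have t1: "pa / s = le / l" unfolding pa_def s_eq using Rpos l by (simp add: field_simps)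
  have cpos: "c > 0" unfolding c_eq using Bpos Rpos n1 by simp
  have "(1-\<alpha>)*pa/(s*\<alpha>+c) \<le> pa / c"
    by (rule frac_le) (use pa_nn al cpos spos in \<open>auto simp: mult_left_le_one_le\<close>)
  also have "pa / c = le * (real n - 1) / B" unfolding pa_def c_eq using Rpos Bpos n1 by (simp add: field_simps)
  also have "\<dots> \<le> le / l" unfolding B_def using le l npos by (simp add: field_simps)
  finally have t2: "(1-\<alpha>)*pa/(s*\<alpha>+c) \<le> le / l" .
  have "L \<le> 2 * le / l" unfolding L_def using t1 t2 by simp
  then show ?thesis using lim mean_eq by auto
qed

theorem theorem1:
  fixes lam_e lam :: real
  assumes "lam_e > 0" and "lam > 0"
  shows "\<exists>C N. \<forall>n\<ge>N. \<forall>i\<in>{1..n}. \<exists>a.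
           ((\<lambda>t. mean_age_at n lam_e lam (real n * lam) i t) \<longlongrightarrow> a) at_top \<and> a \<le> C"
  using main_fixed[OF assms] by blast

end
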